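(* Let $T$ be a Fano tetrahedron in $\mathbb{Z}^3$ with vertices $x_1=(1,0,0)$, $x_2=(0,1,0)$, $x_3=(k''\lambda_4-a\lambda_1,\ k'\lambda_4-a\lambda_2,\ k\lambda_4)$, $x_4=(-k''\lambda_3-b\lambda_1,\ -k'\lambda_3-b\lambda_2,\ -k\lambda_3)$, where $\lambda_1\le\cdots\le\lambda_4$ are non-negative integers with $\gcd(\lambda_1,\ldots,\lambda_4)=1$ and $\sum_i\lambda_ix_i=0$, $a,b\in\mathbb{Z}$ with $a>0$ and $a\lambda_3+b\lambda_4=1$, and $k,k',k''\in\mathbb{N}$ with $0\le k''\lambda_4-a\lambda_1<k\lambda_4$ and $0\le k'\lambda_4-a\lambda_2<k\lambda_4$. Suppose that $k''\lambda_4-a\lambda_1=0$ or $k'\lambda_4-a\lambda_2=0$. Then $T$ is equivalent under $GL(3,\mathbb{Z})$ to the tetrahedron with vertices $e_1,e_2,e_3,-e_1-e_2-e_3$.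
   Context: A tetrahedron is called Fano if its vertices lie in $\mathbb{Z}^3$ and the only lattice point it contains other than its vertices is the origin, which lies strictly in its interior. $e_1,e_2,e_3$ is the standard basis of $\mathbb{Z}^3$. *)

theory Defs
  imports "HOL-Analysis.Analysis"
begin

definition vec3 :: "int \<Rightarrow> int \<Rightarrow> int \<Rightarrow> real^3" where
  "vec3 a b c = vector [real_of_int a, real_of_int b, real_of_int c]"

definition lattice_point :: "real^3 \<Rightarrow> bool" where
  "lattice_point x \<longleftrightarrow> (\<forall>i. x $ i \<in> \<int>)"

definition fano_tetrahedron :: "real^3 \<Rightarrow> real^3 \<Rightarrow> real^3 \<Rightarrow> real^3 \<Rightarrow> bool" where
  "fano_tetrahedron v1 v2 v3 v4 \<longleftrightarrow>
     card {v1, v2, v3, v4} = 4 \<and> \<not> affine_dependent {v1, v2, v3, v4} \<and>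
     (\<forall>v\<in>{v1, v2, v3, v4}. lattice_point v) \<and>
     {x \<in> convex hull {v1, v2, v3, v4}. lattice_point x} = insert 0 {v1, v2, v3, v4} \<and>
     0 \<in> interior (convex hull {v1, v2, v3, v4})"

definition GL3Z_equivalent :: "(real^3) set \<Rightarrow> (real^3) set \<Rightarrow> bool" where
  "GL3Z_equivalent V W \<longleftrightarrow>
     (\<exists>M :: real^3^3. (\<forall>i j. M $ i $ j \<in> \<int>) \<and> \<bar>det M\<bar> = 1 \<and> (\<lambda>v. M *v v) ` V = W)"

end

theory Submission
  imports Defs
begin

lemma vec3_comp: "vec3 a b c $ 1 = a" "vec3 a b c $ 2 = b" "vec3 a b c $ 3 = c"
  by (simp_all add: vec3_def)

lemma vec_eq3: "(x::real^3) = y \<longleftrightarrow> x$1=y$1 \<and> x$2=y$2 \<and> x$3=y$3" by (simp add: vec_eq_iff forall_3)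
lemma hullA: fixes q K :: int assumes "K \<ge> 2" shows "vec3 0 0 1 \<in> convex hull {0, vec3 0 1 0, vec3 0 0 K}"
proof -
  have K: "real_of_int K \<ge> 2" using assms by simp
  show ?thesis unfolding convex_hull_3
    apply (rule CollectI, rule exI[of _ "1 - 1/K"], rule exI[of _ 0], rule exI[of _ "1/K"])
    using K by (simp add: vec_eq3 vec3_comp)
qed
lemma hullB: fixes q K :: int assumes "K \<ge> 2" "q \<ge> 1" "q < K"
  shows "vec3 0 1 1 \<in> convex hull {0, vec3 0 1 0, vec3 0 q K}"
proof -
  have K: "real_of_int K \<ge> 2" "real_of_int q \<ge> 1" "real_of_int q < K" using assms by simp_all
  show ?thesis unfolding convex_hull_3
    apply (rule CollectI, rule exI[of _ "q/K - 1/K"], rule exI[of _ "1 - q/K"], rule exI[of _ "1/K"])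
    using K by (simp add: vec_eq3 vec3_comp field_simps)
qed
lemma hullC: fixes q K :: int assumes "K \<ge> 2" "q \<ge> 1" "q < K"
  shows "vec3 1 0 1 \<in> convex hull {0, vec3 1 0 0, vec3 q 0 K}"
proof -
  have K: "real_of_int K \<ge> 2" "real_of_int q \<ge> 1" "real_of_int q < K" using assms by simp_all
  show ?thesis unfolding convex_hull_3
    apply (rule CollectI, rule exI[of _ "q/K - 1/K"], rule exI[of _ "1 - q/K"], rule exI[of _ "1/K"])
    using K by (simp add: vec_eq3 vec3_comp field_simps)
qed

lemma vec3_eq: "vec3 a b c = vec3 a' b' c' \<longleftrightarrow> a = a' \<and> b = b' \<and> c = c'"
  by (auto simp: vec_eq_iff forall_3 vec3_def)

lemma vec3_zero: "(0::real^3) = vec3 0 0 0"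
  by (simp add: vec_eq_iff forall_3 vec3_def)

lemma vec3_lp: "lattice_point (vec3 a b c)"
  unfolding lattice_point_def
proof
  fix i :: 3
  have "i = 1 \<or> i = 2 \<or> i = 3" using exhaust_3 by blast
  thus "vec3 a b c $ i \<in> \<int>" by (auto simp: vec3_comp)
qed

lemma lp_contra:
  assumes F: "fano_tetrahedron v1 v2 v3 v4"
    and u: "u \<in> {v1,v2,v3,v4}" and w: "w \<in> {v1,v2,v3,v4}"
    and P: "P \<in> convex hull {0, u, w}" "lattice_point P" "P \<notin> {0,v1,v2,v3,v4}"
  shows False
proof -
  let ?S = "{v1,v2,v3,v4}"
  have i0: "0 \<in> interior (convex hull ?S)" using F by (simp only: fano_tetrahedron_def)
  have L: "{x \<in> convex hull ?S. lattice_point x} = insert 0 ?S" using F by (simp only: fano_tetrahedron_def)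
  have "0 \<in> convex hull ?S" using interior_subset i0 by (rule subsetD)
  moreover have "u \<in> convex hull ?S" using u by (rule hull_inc)
  moreover have "w \<in> convex hull ?S" using w by (rule hull_inc)
  ultimately have "{0,u,w} \<subseteq> convex hull ?S" by simp
  hence "convex hull {0,u,w} \<subseteq> convex hull ?S"
    by (simp add: convex_convex_hull hull_minimal)
  hence "P \<in> convex hull ?S" using P(1) by (rule subsetD)
  hence "P \<in> {x \<in> convex hull ?S. lattice_point x}" using P(2) by simp
  hence "P \<in> insert 0 ?S" using L by simp
  thus False using P(3) by simp
qed

lemma halfspace_contra:
  assumes F: "fano_tetrahedron v1 v2 v3 v4"
    and h: "\<forall>v\<in>{v1,v2,v3,v4}. v $ 1 \<ge> 0"
  shows False
proof -
  let ?S = "{v1,v2,v3,v4}"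
  let ?H = "{x::real^3. x $ 1 \<ge> 0}"
  have cH: "convex ?H" unfolding convex_def by (auto intro!: add_nonneg_nonneg)
  have sub: "?S \<subseteq> ?H" using h by blast
  have hs: "convex hull ?S \<subseteq> ?H" using sub cH by (rule hull_minimal)
  have "0 \<in> interior (convex hull ?S)" using F by (simp only: fano_tetrahedron_def)
  then obtain e where e: "e > 0" "ball 0 e \<subseteq> convex hull ?S"
    using mem_interior by blast
  let ?x = "(- e/2) *\<^sub>R (axis 1 1 :: real^3)"
  have "norm ?x = e/2" using e by simp
  hence "?x \<in> ball 0 e" using e by simp
  hence "?x \<in> ?H" using e(2) hs by blast
  thus False using e by (simp add: axis_def)
qed

theorem proposition3p2:
  fixes l1 l2 l3 l4 a b :: int and k k' k'' :: nat
  assumes "0 \<le> l1" "l1 \<le> l2" "l2 \<le> l3" "l3 \<le> l4"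
    and "gcd (gcd l1 l2) (gcd l3 l4) = 1"
    and "a > 0" "a * l3 + b * l4 = 1"
    and "0 \<le> int k'' * l4 - a * l1" "int k'' * l4 - a * l1 < int k * l4"
    and "0 \<le> int k' * l4 - a * l2" "int k' * l4 - a * l2 < int k * l4"
    and "real_of_int l1 *\<^sub>R vec3 1 0 0 + real_of_int l2 *\<^sub>R vec3 0 1 0
         + real_of_int l3 *\<^sub>R vec3 (int k'' * l4 - a * l1) (int k' * l4 - a * l2) (int k * l4)
         + real_of_int l4 *\<^sub>R vec3 (- int k'' * l3 - b * l1) (- int k' * l3 - b * l2) (- int k * l3)
         = 0"
    and "fano_tetrahedron (vec3 1 0 0) (vec3 0 1 0)
           (vec3 (int k'' * l4 - a * l1) (int k' * l4 - a * l2) (int k * l4))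
           (vec3 (- int k'' * l3 - b * l1) (- int k' * l3 - b * l2) (- int k * l3))"
    and "int k'' * l4 - a * l1 = 0 \<or> int k' * l4 - a * l2 = 0"
  shows "GL3Z_equivalent
           {vec3 1 0 0, vec3 0 1 0,
            vec3 (int k'' * l4 - a * l1) (int k' * l4 - a * l2) (int k * l4),
            vec3 (- int k'' * l3 - b * l1) (- int k' * l3 - b * l2) (- int k * l3)}
           {vec3 1 0 0, vec3 0 1 0, vec3 0 0 1, vec3 (-1) (-1) (-1)}"
proof -
  define p where "p = int k'' * l4 - a * l1"
  define q where "q = int k' * l4 - a * l2"
  define K where "K = int k * l4"
  define x4 where "x4 = vec3 (- int k'' * l3 - b * l1) (- int k' * l3 - b * l2) (- int k * l3)"
  have F: "fano_tetrahedron (vec3 1 0 0) (vec3 0 1 0) (vec3 p q K) x4"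
    using assms(13) unfolding p_def q_def K_def x4_def .
  have x4z: "x4 $ 3 \<le> 0" using assms(1-4) by (simp add: x4_def vec3_comp)
  have K1: "K = 1"
  proof (rule ccontr)
    assume "K \<noteq> 1"
    hence K2: "K \<ge> 2" using assms(8,9) unfolding K_def p_def by linarith
    have ne: "P \<notin> {0, vec3 1 0 0, vec3 0 1 0, vec3 p q K, x4}" if "P $ 3 = 1" for P
    proof -
      have "P \<noteq> x4" using x4z that by auto
      moreover have "P \<noteq> vec3 p q K" using K2 that by (auto simp: vec3_comp)
      ultimately show ?thesis using that by (auto simp: vec3_comp)
    qed
    have KR: "real_of_int K \<ge> 2" using K2 by simp
    show False
    proof (cases "p = 0")
      case True
      show False
      proof (cases "q = 0")
        case True
        have "vec3 0 0 1 \<in> convex hull {0, vec3 0 1 0, vec3 p q K}"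
          using hullA[OF K2] True \<open>p = 0\<close> by simp
        then show False using lp_contra[OF F, of "vec3 0 1 0" "vec3 p q K" "vec3 0 0 1"] ne[of "vec3 0 0 1"]
          by (simp add: vec3_lp vec3_comp)
      next
        case False
        have q: "q \<ge> 1" "q < K" using False assms(10,11) unfolding q_def K_def by auto
        hence qR: "real_of_int q \<ge> 1" "real_of_int q < K" by linarith+
        have "vec3 0 1 1 \<in> convex hull {0, vec3 0 1 0, vec3 p q K}"
          using hullB[OF K2 q] \<open>p = 0\<close> by simp
        then show False using lp_contra[OF F, of "vec3 0 1 0" "vec3 p q K" "vec3 0 1 1"] ne[of "vec3 0 1 1"]
          by (simp add: vec3_lp vec3_comp)
      qed
    next
      case False
      hence q0: "q = 0" using assms(14) unfolding p_def q_def by blast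
      show False
      proof -
        have p: "p \<ge> 1" "p < K" using False assms(8,9) unfolding p_def K_def by auto
        hence pR: "real_of_int p \<ge> 1" "real_of_int p < K" by linarith+
        have "vec3 1 0 1 \<in> convex hull {0, vec3 1 0 0, vec3 p q K}"
          using hullC[OF K2 p] q0 by simp
        then show False using lp_contra[OF F, of "vec3 1 0 0" "vec3 p q K" "vec3 1 0 1"] ne[of "vec3 1 0 1"]
          by (simp add: vec3_lp vec3_comp)
      qed
    qed
  qed
  have l4: "l4 = 1" and k: "k = 1"
  proof -
    have "int k * l4 = 1" using K1 unfolding K_def .
    hence "(int k = 1 \<and> l4 = 1) \<or> (int k = -1 \<and> l4 = -1)" by (simp only: zmult_eq_1_iff)
    thus "l4 = 1" "k = 1" by auto
  qed
  have p0: "p = 0" "q = 0" using K1 assms(8-11) unfolding p_def q_def K_def by auto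
  have l1: "l1 \<ge> 1"
  proof (rule ccontr)
    assume "\<not> l1 \<ge> 1"
    hence "l1 = 0" using assms(1) by simp
    moreover have "k'' = 0" using p0 l4 \<open>l1 = 0\<close> unfolding p_def by simp
    ultimately have "x4 $ 1 = 0" by (simp add: x4_def vec3_comp)
    thus False using halfspace_contra[OF F] p0 by (auto simp: vec3_comp)
  qed
  have ls: "l1 = 1" "l2 = 1" "l3 = 1" using l1 l4 assms(1-4) by auto
  have kk: "int k'' = a" "int k' = a" using p0 ls l4 unfolding p_def q_def by auto
  have ab: "a + b = 1" using assms(7) ls l4 by simp
  have x4v: "x4 = vec3 (-1) (-1) (-1)"
    unfolding x4_def vec3_eq using kk ab ls k by simp
  have "vec3 p q K = vec3 0 0 1" using p0 K1 by simp
  hence eq: "{vec3 1 0 0, vec3 0 1 0, vec3 p q K, x4} = {vec3 1 0 0, vec3 0 1 0, vec3 0 0 1, vec3 (-1) (-1) (-1)}"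
    using x4v by simp
  show ?thesis
    unfolding GL3Z_equivalent_def p_def[symmetric] q_def[symmetric] K_def[symmetric] x4_def[symmetric] eq
    apply (rule exI[of _ "mat 1"])
    apply (intro conjI)
      apply (simp add: mat_def)
     apply (simp add: det_I)
    apply (simp add: matrix_vector_mul_lid)
    done
qed

end
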